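(* Let $G$ be a graph. Then $G$ has exactly one minimum zero forcing set (i.e., $G$ is a unique zero forcing graph) if and only if $G$ has no edges.
   Context: Zero forcing: in a graph $G$, starting with an initial set $S\subseteq V(G)$ of active vertices, repeatedly apply the rule: if an active vertex $u$ has exactly one non-active neighbor $v$, then $v$ becomes active. $S$ is a zero forcing set if eventually all vertices become active; a minimum zero forcing set is a zero forcing set of minimum size. *)

theory Defs
  imports Main
begin

definition simple_graph :: "'a set \<Rightarrow> ('a \<Rightarrow> 'a \<Rightarrow> bool) \<Rightarrow> bool" where
  "simple_graph V E \<longleftrightarrow> finite V \<and> (\<forall>u v. E u v \<longrightarrow> u \<in> V \<and> v \<in> V)
     \<and> (\<forall>u v. E u v \<longrightarrow> E v u) \<and> (\<forall>u. \<not> E u u)"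

inductive_set zf_closure :: "'a set \<Rightarrow> ('a \<Rightarrow> 'a \<Rightarrow> bool) \<Rightarrow> 'a set \<Rightarrow> 'a set"
  for V E S where
  init: "v \<in> S \<Longrightarrow> v \<in> zf_closure V E S"
| force: "\<lbrakk>u \<in> zf_closure V E S; v \<in> V; E u v;
           \<forall>w \<in> V. E u w \<and> w \<noteq> v \<longrightarrow> w \<in> zf_closure V E S\<rbrakk>
          \<Longrightarrow> v \<in> zf_closure V E S"

definition zero_forcing_set :: "'a set \<Rightarrow> ('a \<Rightarrow> 'a \<Rightarrow> bool) \<Rightarrow> 'a set \<Rightarrow> bool" where
  "zero_forcing_set V E S \<longleftrightarrow> S \<subseteq> V \<and> V \<subseteq> zf_closure V E S"

definition min_zero_forcing_set :: "'a set \<Rightarrow> ('a \<Rightarrow> 'a \<Rightarrow> bool) \<Rightarrow> 'a set \<Rightarrow> bool" where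
  "min_zero_forcing_set V E S \<longleftrightarrow> zero_forcing_set V E S
     \<and> (\<forall>T. zero_forcing_set V E T \<longrightarrow> card S \<le> card T)"

end

theory Submission
  imports Defs
begin

fun fvalid :: "'a set \<Rightarrow> ('a \<Rightarrow> 'a \<Rightarrow> bool) \<Rightarrow> 'a set \<Rightarrow> ('a \<times> 'a) list \<Rightarrow> bool" where
  "fvalid V E A [] = True"
| "fvalid V E A ((u,v)#fs) = (u \<in> A \<and> v \<in> V \<and> v \<notin> A \<and> E u v \<and>
      (\<forall>w\<in>V. E u w \<and> w \<noteq> v \<longrightarrow> w \<in> A) \<and> fvalid V E (insert v A) fs)"

lemma fvalid_app:
  "fvalid V E A (fs @ [(u,v)]) = (fvalid V E A fs \<and> u \<in> A \<union> snd ` set fs \<and> v \<in> V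
     \<and> v \<notin> A \<union> snd ` set fs \<and> E u v \<and> (\<forall>w\<in>V. E u w \<and> w \<noteq> v \<longrightarrow> w \<in> A \<union> snd ` set fs))"
proof (induction fs arbitrary: A)
  case Nil then show ?case by simp
next
  case (Cons p fs)
  obtain a b where p: "p = (a,b)" by force
  have e: "insert b A \<union> snd ` set fs = A \<union> snd ` set (p # fs)" using p by auto
  show ?case unfolding p fvalid.simps append_Cons Cons.IH e[unfolded p]
    by blast
qed

lemma fvalid_snd: "fvalid V E A fs \<Longrightarrow> (a,b) \<in> set fs \<Longrightarrow> b \<notin> A \<and> b \<in> V"
  by (induction fs arbitrary: A) fastforce+

lemma fvalid_fst: "fvalid V E A fs \<Longrightarrow> (a,b) \<in> set fs \<Longrightarrow> a \<in> A \<union> snd ` set fs"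
  by (induction fs arbitrary: A) fastforce+

lemma fvalid_nb: "fvalid V E A fs \<Longrightarrow> (a,b) \<in> set fs \<Longrightarrow> w \<in> V \<Longrightarrow> E a w \<Longrightarrow> w \<noteq> b
   \<Longrightarrow> w \<in> A \<union> snd ` set fs"
  by (induction fs arbitrary: A) fastforce+

lemma fvalid_edge: "fvalid V E A fs \<Longrightarrow> (a,b) \<in> set fs \<Longrightarrow> E a b"
  by (induction fs arbitrary: A) auto

lemma fvalid_dsnd: "fvalid V E A fs \<Longrightarrow> distinct (map snd fs)"
proof (induction fs arbitrary: A)
  case Nil then show ?case by simp
next
  case (Cons p fs)
  obtain u v where p: "p = (u,v)" by force
  show ?case using Cons p fvalid_snd[of V E "insert v A" fs] by force
qed

lemma fvalid_dfst: "fvalid V E A fs \<Longrightarrow> distinct (map fst fs)"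
proof (induction fs arbitrary: A)
  case Nil then show ?case by simp
next
  case (Cons p fs)
  obtain u v where p: "p = (u,v)" by force
  have "u \<notin> fst ` set fs"
  proof
    assume "u \<in> fst ` set fs"
    then obtain b where b: "(u,b) \<in> set fs" by force
    have fv: "fvalid V E (insert v A) fs" using Cons.prems p by simp
    from fvalid_snd[OF fv b] have "b \<notin> insert v A" "b \<in> V" by auto
    moreover have "E u b" using fvalid_edge[OF fv b] .
    ultimately show False using Cons.prems p by auto
  qed
  then show ?case using Cons p by force
qed

lemma fvalid_rev:
  assumes sg: "simple_graph V E" and SV: "S \<subseteq> V"
  shows "fvalid V E S ps \<Longrightarrow> V - fst ` set ps \<subseteq> zf_closure V E T \<Longrightarrow> V \<subseteq> zf_closure V E T"
proof (induction ps rule: rev_induct)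
  case Nil then show ?case by simp
next
  case (snoc p ps)
  obtain u v where p: "p = (u,v)" by force
  let ?A = "S \<union> snd ` set ps"
  let ?C = "zf_closure V E T"
  have fv: "fvalid V E S ps" and uA: "u \<in> ?A" and vV: "v \<in> V" and vA: "v \<notin> ?A"
    and uv: "E u v" and nb: "\<forall>w\<in>V. E u w \<and> w \<noteq> v \<longrightarrow> w \<in> ?A"
    using snoc.prems(1) p by (auto simp: fvalid_app)
  have AV: "?A \<subseteq> V" using SV fvalid_snd[OF fv] by auto
  have hyp: "V - fst ` set ps - {u} \<subseteq> ?C" using snoc.prems(2) p by auto
  have vu: "v \<noteq> u" using uv sg unfolding simple_graph_def by auto
  have vnf: "v \<notin> fst ` set ps"
  proof
    assume "v \<in> fst ` set ps"
    then obtain b where "(v,b) \<in> set ps" by force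
    from fvalid_fst[OF fv this] vA show False by simp
  qed
  have vC: "v \<in> ?C" using hyp vV vu vnf by auto
  have wC: "\<forall>w\<in>V. E v w \<and> w \<noteq> u \<longrightarrow> w \<in> ?C"
  proof (intro ballI impI)
    fix w assume wV: "w \<in> V" and w: "E v w \<and> w \<noteq> u"
    have "w \<notin> fst ` set ps"
    proof
      assume "w \<in> fst ` set ps"
      then obtain b where b: "(w,b) \<in> set ps" by force
      have "E w v" using w sg unfolding simple_graph_def by auto
      moreover have "b \<in> snd ` set ps" using b by (metis image_eqI snd_conv)
      then have "v \<noteq> b" using vA by blast
      ultimately show False using fvalid_nb[OF fv b vV] vA by auto
    qed
    then show "w \<in> ?C" using hyp wV w by auto
  qed
  have uC: "u \<in> ?C"
    using zf_closure.force[OF vC _ _ wC] uA AV uv sg unfolding simple_graph_def by auto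
  have "V - fst ` set ps \<subseteq> ?C" using hyp uC by auto
  then show ?case using snoc.IH fv by blast
qed

lemma fvalid_len: "fvalid V E A fs \<Longrightarrow> finite V \<Longrightarrow> length fs \<le> card V"
proof -
  assume fv: "fvalid V E A fs" and fin: "finite V"
  have "length fs = card (snd ` set fs)"
    using distinct_card[OF fvalid_dsnd[OF fv]] by simp
  also have "\<dots> \<le> card V"
    using fvalid_snd[OF fv] fin by (intro card_mono) auto
  finally show ?thesis .
qed

lemma exists_chron:
  assumes fin: "finite V"
  shows "\<exists>fs. fvalid V E S fs \<and> zf_closure V E S \<subseteq> S \<union> snd ` set fs"
proof -
  let ?P = "\<lambda>n. \<exists>fs. fvalid V E S fs \<and> length fs = n"
  have "?P 0" by auto
  moreover have "\<forall>y. ?P y \<longrightarrow> y \<le> card V" using fvalid_len fin by blast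
  ultimately obtain n where n: "?P n" and mx: "\<forall>y. ?P y \<longrightarrow> y \<le> n"
    using Nat.ex_has_greatest_nat[of ?P 0 "card V"] by blast
  then obtain fs where fv: "fvalid V E S fs" and len: "length fs = n" by blast
  have "x \<in> S \<union> snd ` set fs" if "x \<in> zf_closure V E S" for x
    using that
  proof (induction rule: zf_closure.induct)
    case (init v) then show ?case by simp
  next
    case (force u v)
    show ?case
    proof (rule ccontr)
      assume "v \<notin> S \<union> snd ` set fs"
      then have "fvalid V E S (fs @ [(u,v)])" using force fv by (auto simp: fvalid_app)
      then have "?P (Suc n)" using len by (intro exI[of _ "fs @ [(u,v)]"]) simp
      then show False using mx by force
    qed
  qed
  then show ?thesis using fv by blast
qed

lemma reversal:
  assumes sg: "simple_graph V E" and zf: "zero_forcing_set V E S"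
  shows "\<exists>fs. fvalid V E S fs \<and> zero_forcing_set V E (V - fst ` set fs)
     \<and> card (V - fst ` set fs) = card S \<and> V \<subseteq> S \<union> snd ` set fs"
proof -
  have fin: "finite V" using sg unfolding simple_graph_def by auto
  have SV: "S \<subseteq> V" using zf unfolding zero_forcing_set_def by auto
  obtain fs where fv: "fvalid V E S fs" and cl: "zf_closure V E S \<subseteq> S \<union> snd ` set fs"
    using exists_chron[OF fin] by blast
  have cov: "V \<subseteq> S \<union> snd ` set fs" using zf cl unfolding zero_forcing_set_def by auto
  let ?R = "V - fst ` set fs"
  have "V \<subseteq> zf_closure V E ?R"
    using fvalid_rev[OF sg SV fv] zf_closure.init[of _ ?R V E] by blast
  then have zfR: "zero_forcing_set V E ?R" unfolding zero_forcing_set_def by auto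
  have sndV: "snd ` set fs \<subseteq> V" and sndS: "snd ` set fs \<inter> S = {}"
    using fvalid_snd[OF fv] by auto
  have Veq: "V = S \<union> snd ` set fs" using cov SV sndV by auto
  have cs: "card (snd ` set fs) = length fs" using distinct_card[OF fvalid_dsnd[OF fv]] by simp
  have cf: "card (fst ` set fs) = length fs" using distinct_card[OF fvalid_dfst[OF fv]] by simp
  have finS: "finite S" using SV fin finite_subset by auto
  have cV: "card V = card S + length fs"
  proof -
    have "card (S \<union> snd ` set fs) = card S + card (snd ` set fs)"
      using card_Un_disjoint[OF finS, of "snd ` set fs"] sndS by blast
    then show ?thesis using Veq cs by simp
  qed
  have fstV: "fst ` set fs \<subseteq> V"
  proof
    fix x assume "x \<in> fst ` set fs"
    then obtain y where "(x,y) \<in> set fs" by force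
    from fvalid_fst[OF fv this] show "x \<in> V" using SV sndV by blast
  qed
  have "card ?R = card V - card (fst ` set fs)"
    using card_Diff_subset[OF _ fstV] by auto
  then have "card ?R = card S" using cV cf by simp
  then show ?thesis using fv zfR cov by blast
qed

theorem corollary3p3:
  fixes V :: "'a set" and E :: "'a \<Rightarrow> 'a \<Rightarrow> bool"
  assumes "simple_graph V E"
  shows "(\<exists>!S. min_zero_forcing_set V E S) \<longleftrightarrow> (\<forall>u v. \<not> E u v)"
proof
  assume uniq: "\<exists>!S. min_zero_forcing_set V E S"
  show "\<forall>u v. \<not> E u v"
  proof (rule ccontr)
    assume "\<not> (\<forall>u v. \<not> E u v)"
    then obtain a b where ab: "E a b" by blast
    have fin: "finite V" and aV: "a \<in> V" and bV: "b \<in> V" and ne: "a \<noteq> b"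
      using assms ab unfolding simple_graph_def by auto
    obtain S where S: "min_zero_forcing_set V E S" using uniq by blast
    have zfS: "zero_forcing_set V E S" using S unfolding min_zero_forcing_set_def by auto
    have "V \<subseteq> zf_closure V E (V - {b})"
    proof
      fix x assume x: "x \<in> V"
      show "x \<in> zf_closure V E (V - {b})"
      proof (cases "x = b")
        case True
        have "a \<in> zf_closure V E (V - {b})" using aV ne by (intro zf_closure.init) auto
        then show ?thesis using True bV ab by (auto intro: zf_closure.force zf_closure.init)
      next
        case False then show ?thesis using x by (intro zf_closure.init) auto
      qed
    qed
    then have "zero_forcing_set V E (V - {b})" unfolding zero_forcing_set_def by auto
    then have "card S \<le> card (V - {b})" using S unfolding min_zero_forcing_set_def by auto
    also have "\<dots> < card V" by (rule card_Diff1_less[OF fin bV])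
    finally have lt: "card S < card V" .
    obtain fs where fv: "fvalid V E S fs" and zfR: "zero_forcing_set V E (V - fst ` set fs)"
      and cR: "card (V - fst ` set fs) = card S" and cov: "V \<subseteq> S \<union> snd ` set fs"
      using reversal[OF assms zfS] by blast
    have "fs \<noteq> []"
    proof
      assume "fs = []"
      then have "V \<subseteq> S" using cov by simp
      then have "S = V" using zfS unfolding zero_forcing_set_def by auto
      then show False using lt by simp
    qed
    then obtain u v fs' where fs: "fs = (u,v) # fs'" by (metis list.exhaust surj_pair)
    have "u \<in> S" using fv fs by simp
    moreover have "u \<notin> V - fst ` set fs" using fs by simp
    ultimately have neq: "V - fst ` set fs \<noteq> S" by blast
    have "min_zero_forcing_set V E (V - fst ` set fs)"
      using zfR cR S unfolding min_zero_forcing_set_def by auto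
    then show False using uniq S neq by blast
  qed
next
  assume noE: "\<forall>u v. \<not> E u v"
  have cl: "zf_closure V E S = S" for S
  proof
    show "zf_closure V E S \<subseteq> S"
    proof
      fix x assume "x \<in> zf_closure V E S"
      then show "x \<in> S" by (induction rule: zf_closure.induct) (use noE in auto)
    qed
  qed (auto intro: zf_closure.init)
  have zf: "zero_forcing_set V E S \<longleftrightarrow> S = V" for S
    unfolding zero_forcing_set_def cl by auto
  show "\<exists>!S. min_zero_forcing_set V E S"
    by (rule ex1I[of _ V]) (auto simp: min_zero_forcing_set_def zf)
qed

end
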